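(* Let $K\ge 3$, let $m_1<\cdots<m_K$ be pairwise co-prime positive integers with $m_1\ge 3$, let $M$ be a positive integer, $M_k=Mm_k$, $\Gamma=\prod_{k=1}^K m_k$, and $d=\min_{I\subseteq\{1,\ldots,K\}}\{\prod_{i\in I}m_i+\prod_{i\notin I}m_i\}$ (empty product $=1$). Let $\{N_1,N_2\}$ and $\{N_1',N_2'\}$ be two $2$-sets of nonnegative integers such that $\{\langle N_1\rangle_{M_k},\langle N_2\rangle_{M_k}\}=\{\langle N_1'\rangle_{M_k},\langle N_2'\rangle_{M_k}\}$ for every $k=1,\ldots,K$. (1) If $\langle N_1\rangle_M\neq\langle N_2\rangle_M$ and $N_1,N_2,N_1',N_2'<M\Gamma$, then $\{N_1,N_2\}=\{N_1',N_2'\}$. (2) If $\langle N_1\rangle_M=\langle N_2\rangle_M$ and $N_1,N_2,N_1',N_2'<Md$, then $\{N_1,N_2\}=\{N_1',N_2'\}$. That is, in case (1) any two distinct nonnegative integers below $M\Gamma$ with distinct remainders modulo $M$, and in case (2) any two distinct nonnegative integers below $Md$ with equal remainders modulo $M$, are uniquely determined by their unordered residue sets modulo $M_1,\ldots,M_K$.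
   Context: For a positive integer $n$ and an integer $x$, $\langle x\rangle_n$ denotes the remainder of $x$ modulo $n$, in $\{0,\ldots,n-1\}$. A $2$-set is a set with exactly two elements; residue sets $\{\langle N_1\rangle_{M_k},\langle N_2\rangle_{M_k}\}$ are unordered sets (repetitions collapse). *)

theory Defs
  imports Main
begin

definition split_min :: "(nat \<Rightarrow> nat) \<Rightarrow> nat \<Rightarrow> nat" where
  "split_min m K = Min {(\<Prod>i\<in>I. m i) + (\<Prod>i\<in>{1..K} - I. m i) | I. I \<subseteq> {1..K}}"

end

theory Submission
  imports Defs "HOL-Number_Theory.Cong"
begin

lemma modM: "a mod (M*c) = b mod (M*c) \<Longrightarrow> a mod M = b mod M" for a b M c :: nat
  by (metis mod_mod_cancel dvd_triv_left)

lemma liftL: "M > 0 \<Longrightarrow> x mod M = x' mod M \<Longrightarrow>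
   (x mod (M*c) = x' mod (M*c)) = (x div M mod c = x' div M mod c)" for x x' M c :: nat
  by (simp add: mod_mult2_eq)

lemma Luniq:
  fixes A :: "nat set" and m :: "nat \<Rightarrow> nat" and M x x' :: nat
  assumes "M > 0" "x mod M = x' mod M"
   and cop: "\<forall>i\<in>A. \<forall>j\<in>A. i\<noteq>j \<longrightarrow> coprime (m i) (m j)"
   and eq: "\<forall>k\<in>A. x mod (M * m k) = x' mod (M * m k)"
   and lt: "x < M * prod m A" "x' < M * prod m A"
  shows "x = x'"
proof -
  have "\<forall>k\<in>A. [x div M = x' div M] (mod m k)"
    using eq liftL[OF assms(1,2)] by (simp add: cong_def)
  hence c: "[x div M = x' div M] (mod prod m A)" using cong_cong_prod_coprime_nat cop by blast
  have "x div M < prod m A" "x' div M < prod m A"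
    using lt by (simp_all add: less_mult_imp_div_less mult.commute)
  with c have "x div M = x' div M" using cong_less_modulus_unique_nat by blast
  then show ?thesis using assms(2) by (metis div_mult_mod_eq)
qed

lemma core:
  fixes A :: "nat set" and m :: "nat \<Rightarrow> nat" and d x y x' y' :: nat
  assumes fin: "finite A"
  and cop: "\<forall>i\<in>A. \<forall>j\<in>A. i\<noteq>j \<longrightarrow> coprime (m i) (m j)"
  and dle: "\<forall>I\<subseteq>A. d \<le> prod m I + prod m (A - I)"
  and d2: "2*d \<le> prod m A"
  and lt: "x<d" "y<d" "x'<d" "y'<d"
  and pair: "\<forall>k\<in>A. (x mod m k = x' mod m k \<and> y mod m k = y' mod m k) \<or> (x mod m k = y' mod m k \<and> y mod m k = x' mod m k)"
  shows "(x=x' \<and> y=y') \<or> (x=y' \<and> y=x')"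
proof -
  define I where "I = {k\<in>A. x mod m k = x' mod m k \<and> y mod m k = y' mod m k}"
  define J where "J = A - I"
  have IA: "I \<subseteq> A" and JA: "J \<subseteq> A" by (auto simp: I_def J_def)
  have cI: "\<forall>i\<in>I. \<forall>j\<in>I. i\<noteq>j \<longrightarrow> coprime (m i) (m j)" using cop IA by blast
  have cJ: "\<forall>i\<in>J. \<forall>j\<in>J. i\<noteq>j \<longrightarrow> coprime (m i) (m j)" using cop JA by blast
  have h1: "[x = x'] (mod prod m I)"
    by (rule cong_cong_prod_coprime_nat[OF _ cI]) (auto simp: I_def cong_def)
  have h2: "[y = y'] (mod prod m I)"
    by (rule cong_cong_prod_coprime_nat[OF _ cI]) (auto simp: I_def cong_def)
  have h3: "[x = y'] (mod prod m J)"
    by (rule cong_cong_prod_coprime_nat[OF _ cJ]) (use pair in \<open>auto simp: I_def J_def cong_def\<close>)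
  have h4: "[y = x'] (mod prod m J)"
    by (rule cong_cong_prod_coprime_nat[OF _ cJ]) (use pair in \<open>auto simp: I_def J_def cong_def\<close>)
  define PI where "PI = int (prod m I)"
  define PJ where "PJ = int (prod m J)"
  have d1: "PI dvd int x - int x'" using h1 unfolding PI_def by (metis cong_int_iff cong_iff_dvd_diff)
  have d2': "PI dvd int y - int y'" using h2 unfolding PI_def by (metis cong_int_iff cong_iff_dvd_diff)
  have d3: "PJ dvd int x - int y'" using h3 unfolding PJ_def by (metis cong_int_iff cong_iff_dvd_diff)
  have d4: "PJ dvd int y - int x'" using h4 unfolding PJ_def by (metis cong_int_iff cong_iff_dvd_diff)
  have copIJ: "coprime (prod m I) (prod m J)"
  proof (rule prod_coprime_left, rule prod_coprime_right)
    fix i j assume "i \<in> I" "j \<in> J"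
    then have "i \<in> A" "j \<in> A" "i \<noteq> j" using IA unfolding J_def by auto
    then show "coprime (m i) (m j)" using cop by blast
  qed
  hence copIJ': "coprime PI PJ" unfolding PI_def PJ_def using coprime_int_iff by blast
  have GA: "prod m A = prod m I * prod m J"
    using prod.subset_diff[OF IA fin, of m] by (simp add: J_def mult.commute)
  have dS: "PI * PJ dvd (int x + int y - int x' - int y')"
  proof (rule divides_mult[OF _ _ copIJ'])
    show "PI dvd int x + int y - int x' - int y'"
      using dvd_add[OF d1 d2'] by (simp add: algebra_simps)
    show "PJ dvd int x + int y - int x' - int y'"
      using dvd_add[OF d3 d4] by (simp add: algebra_simps)
  qed
  have G: "PI * PJ = int (prod m A)" unfolding PI_def PJ_def GA by simp
  have S0: "int x + int y - int x' - int y' = 0"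
  proof (rule ccontr)
    assume "int x + int y - int x' - int y' \<noteq> 0"
    from dvd_imp_le_int[OF this dS] G d2 lt show False by linarith
  qed
  have "d \<le> prod m I + prod m (A - I)" using dle IA by blast
  hence dIJ: "int d \<le> PI + PJ" unfolding PI_def PJ_def J_def by linarith
  define t where "t = int x - int x'"
  define s where "s = int x - int y'"
  show ?thesis
  proof (cases "t = 0 \<or> s = 0")
    case True then show ?thesis using S0 unfolding t_def s_def by auto
  next
    case False
    have "\<bar>PI\<bar> \<le> \<bar>t\<bar>" using dvd_imp_le_int[of t PI] d1 False unfolding t_def by blast
    moreover have "\<bar>PJ\<bar> \<le> \<bar>s\<bar>" using dvd_imp_le_int[of s PJ] d3 False unfolding s_def by blast
    ultimately have "PI \<le> \<bar>t\<bar>" "PJ \<le> \<bar>s\<bar>" unfolding PI_def PJ_def by simp_all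
    with dIJ S0 lt have False unfolding t_def s_def by arith
    then show ?thesis ..
  qed
qed

theorem corollary1:
  fixes K M :: nat and m :: "nat \<Rightarrow> nat" and N1 N2 N1' N2' :: nat
  assumes K3: "K \<ge> 3"
    and incr: "\<And>i j. 1 \<le> i \<Longrightarrow> i < j \<Longrightarrow> j \<le> K \<Longrightarrow> m i < m j"
    and pos: "\<And>i. 1 \<le> i \<Longrightarrow> i \<le> K \<Longrightarrow> m i > 0"
    and copr: "\<And>i j. 1 \<le> i \<Longrightarrow> i \<le> K \<Longrightarrow> 1 \<le> j \<Longrightarrow> j \<le> K \<Longrightarrow> i \<noteq> j \<Longrightarrow> coprime (m i) (m j)"
    and m1: "m 1 \<ge> 3"
    and Mpos: "M > 0"
    and two: "N1 \<noteq> N2" "N1' \<noteq> N2'"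
    and res: "\<And>k. 1 \<le> k \<Longrightarrow> k \<le> K \<Longrightarrow>
       {N1 mod (M * m k), N2 mod (M * m k)} = {N1' mod (M * m k), N2' mod (M * m k)}"
  shows "(N1 mod M \<noteq> N2 mod M \<and>
           N1 < M * (\<Prod>k=1..K. m k) \<and> N2 < M * (\<Prod>k=1..K. m k) \<and>
           N1' < M * (\<Prod>k=1..K. m k) \<and> N2' < M * (\<Prod>k=1..K. m k)
           \<longrightarrow> {N1, N2} = {N1', N2'})
       \<and> (N1 mod M = N2 mod M \<and>
           N1 < M * split_min m K \<and> N2 < M * split_min m K \<and>
           N1' < M * split_min m K \<and> N2' < M * split_min m K
           \<longrightarrow> {N1, N2} = {N1', N2'})"
proof -
  define A where "A = {1..K::nat}"
  have fin: "finite A" by (simp add: A_def)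
  have cop: "\<forall>i\<in>A. \<forall>j\<in>A. i\<noteq>j \<longrightarrow> coprime (m i) (m j)" using copr by (auto simp: A_def)
  have pair: "\<And>k. k \<in> A \<Longrightarrow> (N1 mod (M*m k) = N1' mod (M*m k) \<and> N2 mod (M*m k) = N2' mod (M*m k))
     \<or> (N1 mod (M*m k) = N2' mod (M*m k) \<and> N2 mod (M*m k) = N1' mod (M*m k))"
    using res by (auto simp: A_def doubleton_eq_iff)
  have oneA: "1 \<in> A" using K3 by (simp add: A_def)
  have pairM: "(N1 mod M = N1' mod M \<and> N2 mod M = N2' mod M) \<or> (N1 mod M = N2' mod M \<and> N2 mod M = N1' mod M)"
    using pair[OF oneA] modM by blast
  have P1: "N1 mod M \<noteq> N2 mod M \<and>
           N1 < M * (\<Prod>k=1..K. m k) \<and> N2 < M * (\<Prod>k=1..K. m k) \<and>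
           N1' < M * (\<Prod>k=1..K. m k) \<and> N2' < M * (\<Prod>k=1..K. m k)
           \<longrightarrow> {N1, N2} = {N1', N2'}"
  proof
    assume h: "N1 mod M \<noteq> N2 mod M \<and>
           N1 < M * (\<Prod>k=1..K. m k) \<and> N2 < M * (\<Prod>k=1..K. m k) \<and>
           N1' < M * (\<Prod>k=1..K. m k) \<and> N2' < M * (\<Prod>k=1..K. m k)"
    hence lt: "N1 < M * prod m A" "N2 < M * prod m A" "N1' < M * prod m A" "N2' < M * prod m A"
      by (simp_all add: A_def)
    from pairM show "{N1, N2} = {N1', N2'}"
    proof
      assume a: "N1 mod M = N1' mod M \<and> N2 mod M = N2' mod M"
      have "\<forall>k\<in>A. N1 mod (M*m k) = N1' mod (M*m k) \<and> N2 mod (M*m k) = N2' mod (M*m k)"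
      proof
        fix k assume k: "k \<in> A"
        show "N1 mod (M*m k) = N1' mod (M*m k) \<and> N2 mod (M*m k) = N2' mod (M*m k)"
          using pair[OF k] modM[of N1 M "m k" N2'] a h by metis
      qed
      hence "N1 = N1'" "N2 = N2'" using Luniq[OF Mpos _ cop _ lt(1,3)] Luniq[OF Mpos _ cop _ lt(2,4)] a by auto
      thus ?thesis by simp
    next
      assume a: "N1 mod M = N2' mod M \<and> N2 mod M = N1' mod M"
      have "\<forall>k\<in>A. N1 mod (M*m k) = N2' mod (M*m k) \<and> N2 mod (M*m k) = N1' mod (M*m k)"
      proof
        fix k assume k: "k \<in> A"
        show "N1 mod (M*m k) = N2' mod (M*m k) \<and> N2 mod (M*m k) = N1' mod (M*m k)"
          using pair[OF k] modM[of N1 M "m k" N1'] a h by metis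
      qed
      hence "N1 = N2'" "N2 = N1'" using Luniq[OF Mpos _ cop _ lt(1,4)] Luniq[OF Mpos _ cop _ lt(2,3)] a by auto
      thus ?thesis by auto
    qed
  qed
  define d where "d = split_min m K"
  have setq: "{(\<Prod>i\<in>I. m i) + (\<Prod>i\<in>{1..K} - I. m i) | I. I \<subseteq> {1..K}}
     = (\<lambda>I. (\<Prod>i\<in>I. m i) + (\<Prod>i\<in>{1..K} - I. m i)) ` Pow {1..K}" by auto
  have dle: "\<forall>I\<subseteq>A. d \<le> prod m I + prod m (A - I)"
  proof (intro allI impI)
    fix I assume "I \<subseteq> A"
    then show "d \<le> prod m I + prod m (A - I)" unfolding d_def split_min_def setq A_def
      by (intro Min_le) auto
  qed
  have m2: "m 2 > m 1" "m 3 > m 2" using incr K3 by auto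
  have posA: "\<And>i. i \<in> A \<Longrightarrow> m i > 0" using pos by (auto simp: A_def)
  have sub23: "{2,3} \<subseteq> A - {1}" using K3 by (auto simp: A_def)
  have "prod m (A - {1}) = prod m ((A - {1}) - {2,3}) * prod m {2,3}"
    using prod.subset_diff[OF sub23] fin by simp
  moreover have "prod m ((A - {1}) - {2,3}) \<ge> 1"
    using posA fin by (simp add: Suc_le_eq prod_pos)
  ultimately have Q: "prod m (A - {1}) \<ge> m 2 * m 3" by simp
  have GA: "prod m A = m 1 * prod m (A - {1})"
    using prod.remove[OF fin oneA] by simp
  have d1: "d \<le> m 1 + prod m (A - {1})" using dle[rule_format, of "{1}"] oneA by simp
  have "m 3 \<ge> 2" using m2 m1 by simp
  hence "m 2 * m 3 \<ge> m 2 * 2" by simp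
  with Q m2 have Q2: "prod m (A - {1}) \<ge> 2 * m 1" by linarith
  have "m 1 * prod m (A - {1}) \<ge> 3 * prod m (A - {1})" using m1 by simp
  with Q2 d1 GA have d2: "2 * d \<le> prod m A" by linarith
  have P2: "N1 mod M = N2 mod M \<and>
           N1 < M * split_min m K \<and> N2 < M * split_min m K \<and>
           N1' < M * split_min m K \<and> N2' < M * split_min m K
           \<longrightarrow> {N1, N2} = {N1', N2'}"
  proof
    assume h: "N1 mod M = N2 mod M \<and>
           N1 < M * split_min m K \<and> N2 < M * split_min m K \<and>
           N1' < M * split_min m K \<and> N2' < M * split_min m K"
    define r where "r = N1 mod M"
    have r: "N1 mod M = r" "N2 mod M = r" "N1' mod M = r" "N2' mod M = r"
      using h pairM by (auto simp: r_def)
    have lt: "N1 div M < d" "N2 div M < d" "N1' div M < d" "N2' div M < d"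
      using h by (simp_all add: d_def less_mult_imp_div_less mult.commute)
    have pa: "\<forall>k\<in>A. (N1 div M mod m k = N1' div M mod m k \<and> N2 div M mod m k = N2' div M mod m k)
       \<or> (N1 div M mod m k = N2' div M mod m k \<and> N2 div M mod m k = N1' div M mod m k)"
    proof
      fix k assume k: "k \<in> A"
      have e1: "(N1 mod (M*m k) = N1' mod (M*m k)) = (N1 div M mod m k = N1' div M mod m k)"
        by (rule liftL[OF Mpos]) (simp add: r)
      have e2: "(N2 mod (M*m k) = N2' mod (M*m k)) = (N2 div M mod m k = N2' div M mod m k)"
        by (rule liftL[OF Mpos]) (simp add: r)
      have e3: "(N1 mod (M*m k) = N2' mod (M*m k)) = (N1 div M mod m k = N2' div M mod m k)"
        by (rule liftL[OF Mpos]) (simp add: r)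
      have e4: "(N2 mod (M*m k) = N1' mod (M*m k)) = (N2 div M mod m k = N1' div M mod m k)"
        by (rule liftL[OF Mpos]) (simp add: r)
      show "(N1 div M mod m k = N1' div M mod m k \<and> N2 div M mod m k = N2' div M mod m k)
       \<or> (N1 div M mod m k = N2' div M mod m k \<and> N2 div M mod m k = N1' div M mod m k)"
        using pair[OF k] e1 e2 e3 e4 by simp
    qed
    have "(N1 div M = N1' div M \<and> N2 div M = N2' div M) \<or> (N1 div M = N2' div M \<and> N2 div M = N1' div M)"
      by (rule core[OF fin cop dle d2 lt pa])
    moreover have "N1 = M * (N1 div M) + r" "N2 = M * (N2 div M) + r"
       "N1' = M * (N1' div M) + r" "N2' = M * (N2' div M) + r"
      using r by (metis div_mult_mod_eq mult.commute)+
    ultimately show "{N1, N2} = {N1', N2'}" by (metis insert_commute)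
  qed
  from P1 P2 show ?thesis by blast
qed

end
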